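(* A quantum channel $\mathcal P$ on $S$ satisfies $\mathcal P(\mathsf{St}(S))=\mathsf P(S)$ if and only if there exists an orthonormal basis $\{|\psi_j\rangle\}_{j=1}^d$ of $\mathbb C^d$ such that $\mathcal P(\rho)=\sum_{j=1}^d\langle\psi_j|\rho|\psi_j\rangle\,\tau_j$ for all $\rho$.
   Context: $S$ is a $d$-dimensional quantum system with non-degenerate Hamiltonian $H=\sum_i E_i|i\rangle\langle i|$, $E_1<\dots<E_d$. $\mathsf{St}(S)$ is the set of density matrices; $\mathsf P(S)$ is the set of passive states, i.e. states $\sum_i p_i|i\rangle\langle i|$ with $p_1\ge\dots\ge p_d$. For $j=1,\dots,d$, $\tau_j=\frac1j\sum_{i=1}^j|i\rangle\langle i|$. *)

theory Defs
  imports "Jordan_Normal_Form.Matrix"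
begin

text \<open>The energy eigenbasis |1>,...,|d> of H (E_1 < ... < E_d) is identified with the
standard basis e_0,...,e_{d-1} of C^d (0-based indexing); operators on S are d x d
complex matrices.\<close>

definition qform :: "nat \<Rightarrow> complex mat \<Rightarrow> complex vec \<Rightarrow> complex" where
  "qform n A v = (\<Sum>i<n. \<Sum>j<n. cnj (v $ i) * A $$ (i, j) * v $ j)"

definition psd :: "nat \<Rightarrow> complex mat \<Rightarrow> bool" where
  "psd n A \<longleftrightarrow> A \<in> carrier_mat n n \<and>
     (\<forall>v \<in> carrier_vec n. Im (qform n A v) = 0 \<and> Re (qform n A v) \<ge> 0)"

definition mtrace :: "complex mat \<Rightarrow> complex" where
  "mtrace A = (\<Sum>i<dim_row A. A $$ (i, i))"

definition density_states :: "nat \<Rightarrow> complex mat set" where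
  "density_states d = {\<rho>. psd d \<rho> \<and> mtrace \<rho> = 1}"

definition passive_states :: "nat \<Rightarrow> complex mat set" where
  "passive_states d = {\<rho>. \<exists>p :: nat \<Rightarrow> real.
      (\<forall>i<d. 0 \<le> p i) \<and> (\<Sum>i<d. p i) = 1 \<and>
      (\<forall>i j. i \<le> j \<longrightarrow> j < d \<longrightarrow> p j \<le> p i) \<and>
      \<rho> = mat d d (\<lambda>(i, k). if i = k then complex_of_real (p i) else 0)}"

text \<open>tau j (0-based, j < d) is the paper's tau_{j+1} = (1/(j+1)) sum_{i \<le> j} |i><i|.\<close>
definition tau :: "nat \<Rightarrow> nat \<Rightarrow> complex mat" where
  "tau d j = mat d d (\<lambda>(i, k). if i = k \<and> i \<le> j then 1 / of_nat (j + 1) else 0)"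

text \<open>The (a,b) d x d block of an (n d) x (n d) matrix (index a*d+k for C^n \<otimes> C^d).\<close>
definition block :: "nat \<Rightarrow> complex mat \<Rightarrow> nat \<Rightarrow> nat \<Rightarrow> complex mat" where
  "block d X a b = mat d d (\<lambda>(k, l). X $$ (a * d + k, b * d + l))"

definition ampl :: "nat \<Rightarrow> nat \<Rightarrow> (complex mat \<Rightarrow> complex mat) \<Rightarrow> complex mat \<Rightarrow> complex mat" where
  "ampl n d P X = mat (n * d) (n * d)
     (\<lambda>(i, j). P (block d X (i div d) (j div d)) $$ (i mod d, j mod d))"

definition quantum_channel :: "nat \<Rightarrow> (complex mat \<Rightarrow> complex mat) \<Rightarrow> bool" where
  "quantum_channel d P \<longleftrightarrow>
     (\<forall>A \<in> carrier_mat d d. P A \<in> carrier_mat d d) \<and>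
     (\<forall>A \<in> carrier_mat d d. \<forall>B \<in> carrier_mat d d. \<forall>a b :: complex.
         P (a \<cdot>\<^sub>m A + b \<cdot>\<^sub>m B) = a \<cdot>\<^sub>m P A + b \<cdot>\<^sub>m P B) \<and>
     (\<forall>A \<in> carrier_mat d d. mtrace (P A) = mtrace A) \<and>
     (\<forall>n X. psd (n * d) X \<longrightarrow> psd (n * d) (ampl n d P X))"

end

theory Submission
  imports Defs "Jordan_Normal_Form.Determinant"
begin


definition qs :: "nat \<Rightarrow> (nat \<Rightarrow> nat \<Rightarrow> complex) \<Rightarrow> (nat \<Rightarrow> complex) \<Rightarrow> complex" where
  "qs d K x = (\<Sum>i<d. \<Sum>j<d. cnj (x i) * K i j * x j)"

definition bil :: "nat \<Rightarrow> (nat \<Rightarrow> nat \<Rightarrow> complex) \<Rightarrow> (nat \<Rightarrow> complex) \<Rightarrow> (nat \<Rightarrow> complex) \<Rightarrow> complex" where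
  "bil d K x y = (\<Sum>i<d. \<Sum>j<d. cnj (x i) * K i j * y j)"

definition dl :: "nat \<Rightarrow> nat \<Rightarrow> complex" where "dl a i = (if i = a then 1 else 0)"

lemma qs_expand:
  "qs d K (\<lambda>i. x i + t * y i) = qs d K x + t * bil d K x y + cnj t * bil d K y x + t * cnj t * qs d K y"
  unfolding qs_def bil_def
  by (simp add: algebra_simps sum.distrib sum_distrib_left)

lemma sum_dl1: "a < d \<Longrightarrow> (\<Sum>i<d. dl a i * F i) = F a"
  unfolding dl_def by (simp add: if_distrib[of "\<lambda>z. z * _"] cong: if_cong)
lemma sum_dl2: "a < d \<Longrightarrow> (\<Sum>i<d. F i * dl a i) = F a"
  unfolding dl_def by (simp add: if_distrib[of "\<lambda>z. _ * z"] cong: if_cong)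
lemma cnj_dl[simp]: "cnj (dl a i) = dl a i" unfolding dl_def by simp

lemma bil_dl_right: "a < d \<Longrightarrow> bil d K x (dl a) = (\<Sum>i<d. cnj (x i) * K i a)"
  unfolding bil_def by (simp add: sum_dl2)

lemma bil_dl_left: "a < d \<Longrightarrow> bil d K (dl a) x = (\<Sum>j<d. K a j * x j)"
  unfolding bil_def by (simp add: mult.assoc sum_dl1 sum_distrib_left[symmetric])

lemma qs_dl: "a < d \<Longrightarrow> qs d K (dl a) = K a a"
  unfolding qs_def by (simp add: mult.assoc sum_dl1 sum_dl2 sum_distrib_left[symmetric])

lemma bil_qs: "bil d K x x = qs d K x" unfolding bil_def qs_def by simp

lemma qs_two: assumes "a < d" "b < d" "a \<noteq> b"
  shows "qs d K (\<lambda>i. dl a i + c * dl b i) = K a a + c * K a b + cnj c * K b a + c * cnj c * K b b"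
  using assms by (simp add: qs_expand qs_dl bil_dl_right bil_dl_left sum_dl1 sum_dl2)



definition psdf :: "nat \<Rightarrow> (nat \<Rightarrow> nat \<Rightarrow> complex) \<Rightarrow> bool" where
  "psdf d K \<longleftrightarrow> (\<forall>x. Im (qs d K x) = 0 \<and> 0 \<le> Re (qs d K x))"

lemma polar: assumes "\<And>x. qs d K x = 0" "a < d" "b < d" shows "K a b = 0"
proof (cases "a = b")
  case True then show ?thesis using assms(1)[of "dl a"] assms(2) by (simp add: qs_dl)
next
  case False
  have aa: "K a a = 0" using assms(1)[of "dl a"] assms(2) by (simp add: qs_dl)
  have bb: "K b b = 0" using assms(1)[of "dl b"] assms(3) by (simp add: qs_dl)
  have 1: "K a b + K b a = 0" using assms(1)[of "\<lambda>i. dl a i + 1 * dl b i"] qs_two[OF assms(2,3) False, of K 1] aa bb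
    by simp
  have 2: "\<i> * K a b - \<i> * K b a = 0" using assms(1)[of "\<lambda>i. dl a i + \<i> * dl b i"] qs_two[OF assms(2,3) False, of K \<i>] aa bb
    by simp
  from 2 have "K a b = K b a" by (simp add: right_diff_distrib[symmetric])
  with 1 show ?thesis by simp
qed

lemma herm: assumes "psdf d K" "a < d" "b < d" shows "K b a = cnj (K a b)"
proof (cases "a = b")
  case True
  have "Im (K a a) = 0" using assms(1) qs_dl[OF assms(2), of K] unfolding psdf_def by metis
  then show ?thesis using True by (simp add: complex_eq_iff)
next
  case False
  have aa: "Im (K a a) = 0" using assms(1) assms(2) unfolding psdf_def by (metis qs_dl)
  have bb: "Im (K b b) = 0" using assms(1) assms(3) unfolding psdf_def by (metis qs_dl)
  have 1: "Im (K a b + K b a) = 0"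
  proof -
    have "Im (qs d K (\<lambda>i. dl a i + 1 * dl b i)) = 0" using assms(1) unfolding psdf_def by blast
    then show ?thesis using qs_two[OF assms(2,3) False, of K 1] aa bb by simp
  qed
  have 2: "Im (\<i> * K a b - \<i> * K b a) = 0"
  proof -
    have "Im (qs d K (\<lambda>i. dl a i + \<i> * dl b i)) = 0" using assms(1) unfolding psdf_def by blast
    then show ?thesis using qs_two[OF assms(2,3) False, of K \<i>] aa bb by (simp add: algebra_simps)
  qed
  show ?thesis using 1 2 by (simp add: complex_eq_iff algebra_simps)
qed



lemma real_cs: fixes A S C :: real
  assumes "0 \<le> S" "0 \<le> A" "0 \<le> C" "\<And>r. 0 \<le> A - 2 * r * S + r^2 * S * C"
  shows "S \<le> A * C"
proof (cases "S = 0")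
  case True then show ?thesis using assms by simp
next
  case False
  then have Sp: "S > 0" using assms by simp
  show ?thesis
  proof (cases "C = 0")
    case True
    have "0 \<le> A - 2 * ((A+1)/(2*S)) * S" using assms(4)[of "(A+1)/(2*S)"] True by simp
    also have "\<dots> = -1" using Sp by (simp add: field_simps)
    finally show ?thesis by simp
  next
    case False
    then have Cp: "C > 0" using assms by simp
    have "0 \<le> A - 2 * (1/C) * S + (1/C)^2 * S * C" using assms(4) by blast
    also have "\<dots> = A - S / C" using Cp by (simp add: field_simps power2_eq_square)
    finally show ?thesis using Cp by (simp add: field_simps)
  qed
qed

lemma bil_swap_herm: assumes "psdf d K" "a < d"
  shows "bil d K (dl a) x = cnj (bil d K x (dl a))"
proof -
  have "bil d K (dl a) x = (\<Sum>j<d. K a j * x j)" using assms(2) by (rule bil_dl_left)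
  also have "\<dots> = (\<Sum>j<d. cnj (cnj (x j) * K j a))"
    by (rule sum.cong, simp, subst herm[OF assms(1) _ assms(2)], auto)
  also have "\<dots> = cnj (bil d K x (dl a))" using assms(2) by (simp add: bil_dl_right)
  finally show ?thesis .
qed

lemma cs: assumes "psdf d K" "a < d"
  shows "(cmod (bil d K x (dl a)))^2 \<le> Re (qs d K x) * Re (K a a)"
proof -
  define s where "s = bil d K x (dl a)"
  define S where "S = (Re s)^2 + (Im s)^2"
  have sw: "bil d K (dl a) x = cnj s" unfolding s_def by (rule bil_swap_herm[OF assms])
  have K: "qs d K (dl a) = K a a" using assms(2) by (rule qs_dl)
  have "\<And>r. 0 \<le> Re (qs d K x) - 2 * r * S + r^2 * S * Re (K a a)"
  proof -
    fix r :: real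
    have "0 \<le> Re (qs d K (\<lambda>i. x i + (- (of_real r * cnj s)) * dl a i))"
      using assms(1) unfolding psdf_def by blast
    also have "\<dots> = Re (qs d K x) - 2 * r * S + r^2 * S * Re (K a a)"
      unfolding qs_expand sw K s_def[symmetric] S_def
      by (simp add: algebra_simps power2_eq_square)
    finally show "0 \<le> Re (qs d K x) - 2 * r * S + r^2 * S * Re (K a a)" .
  qed
  moreover have "0 \<le> Re (qs d K x)" "0 \<le> Re (K a a)" using assms(1) K unfolding psdf_def by metis+
  ultimately have "S \<le> Re (qs d K x) * Re (K a a)" by (intro real_cs) (auto simp: S_def)
  then show ?thesis unfolding S_def s_def by (simp add: cmod_power2)
qed

lemma cs_zero: assumes "psdf d K" "qs d K x = 0" "a < d"
  shows "(\<Sum>j<d. K a j * x j) = 0"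
proof -
  have "(cmod (bil d K x (dl a)))^2 \<le> 0" using cs[OF assms(1,3), of x] assms(2) by simp
  then have "bil d K x (dl a) = 0" by simp
  then have "bil d K (dl a) x = 0" using bil_swap_herm[OF assms(1,3)] by simp
  then show ?thesis using bil_dl_left[OF assms(3)] by simp
qed

lemma cs_entry: assumes "psdf d K" "a < d" "b < d"
  shows "(cmod (K b a))^2 \<le> Re (K b b) * Re (K a a)"
proof -
  have "bil d K (dl b) (dl a) = K b a" using assms by (simp add: bil_dl_right sum_dl1)
  then show ?thesis using cs[OF assms(1,2), of "dl b"] qs_dl[OF assms(3)] by simp
qed



definition Em :: "nat \<Rightarrow> nat \<Rightarrow> nat \<Rightarrow> complex mat" where
  "Em d a b = mat d d (\<lambda>(i,j). if i = a \<and> j = b then 1 else 0)"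

definition rk1 :: "nat \<Rightarrow> (nat \<Rightarrow> complex) \<Rightarrow> complex mat" where
  "rk1 d x = mat d d (\<lambda>(i,j). x i * cnj (x j))"

definition linf :: "nat \<Rightarrow> (complex mat \<Rightarrow> complex) \<Rightarrow> bool" where
  "linf d f \<longleftrightarrow> (\<forall>A \<in> carrier_mat d d. \<forall>B \<in> carrier_mat d d. \<forall>a b.
      f (a \<cdot>\<^sub>m A + b \<cdot>\<^sub>m B) = a * f A + b * f B)"

lemma Em_carrier[simp]: "Em d a b \<in> carrier_mat d d" unfolding Em_def by simp
lemma rk1_carrier[simp]: "rk1 d x \<in> carrier_mat d d" unfolding rk1_def by simp

lemma linf_zero: assumes "linf d f" shows "f (0\<^sub>m d d) = 0"
proof -
  have "(0::complex) \<cdot>\<^sub>m 0\<^sub>m d d + (0::complex) \<cdot>\<^sub>m 0\<^sub>m d d = 0\<^sub>m d d" by (rule eq_matI) auto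
  then show ?thesis using assms unfolding linf_def
    by (metis mult_zero_left add_0 zero_carrier_mat)
qed

lemma linf_smult: assumes "linf d f" "A \<in> carrier_mat d d" shows "f (c \<cdot>\<^sub>m A) = c * f A"
proof -
  have "c \<cdot>\<^sub>m A + 0 \<cdot>\<^sub>m A = c \<cdot>\<^sub>m A" using assms(2) by (intro eq_matI) auto
  then show ?thesis using assms unfolding linf_def by (metis add_0_right mult_zero_left)
qed

lemma linf_add: assumes "linf d f" "A \<in> carrier_mat d d" "B \<in> carrier_mat d d"
  shows "f (A + B) = f A + f B"
proof -
  have "1 \<cdot>\<^sub>m A + 1 \<cdot>\<^sub>m B = A + B" using assms(2,3) by (intro eq_matI) auto
  then show ?thesis using assms unfolding linf_def by (metis mult_1)
qed

lemma repr_aux: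
  assumes f: "linf d f" and X: "X \<in> carrier_mat d d"
  shows "finite S \<Longrightarrow> S \<subseteq> {..<d} \<times> {..<d} \<Longrightarrow>
    f (mat d d (\<lambda>p. if p \<in> S then X $$ p else 0)) = (\<Sum>p\<in>S. X $$ p * f (Em d (fst p) (snd p)))"
proof (induction S rule: finite_induct)
  case empty
  have "mat d d (\<lambda>p. if p \<in> {} then X $$ p else 0) = 0\<^sub>m d d" by (rule eq_matI) auto
  then show ?case unfolding sum.empty by (simp only: linf_zero[OF f])
next
  case (insert p S)
  have eq: "mat d d (\<lambda>q. if q \<in> insert p S then X $$ q else 0)
     = mat d d (\<lambda>p. if p \<in> S then X $$ p else 0) + (X $$ p) \<cdot>\<^sub>m Em d (fst p) (snd p)"
    using insert(2) by (intro eq_matI) (auto simp: Em_def)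
  show ?case unfolding eq using insert
    by (simp add: linf_add[OF f] linf_smult[OF f])
qed

lemma repr: assumes f: "linf d f" and X: "X \<in> carrier_mat d d"
  shows "f X = (\<Sum>a<d. \<Sum>b<d. X $$ (a,b) * f (Em d a b))"
proof -
  have eq: "mat d d (\<lambda>p. if p \<in> {..<d} \<times> {..<d} then X $$ p else 0) = X"
    using X by (intro eq_matI) auto
  have "f X = (\<Sum>p\<in>{..<d} \<times> {..<d}. X $$ p * f (Em d (fst p) (snd p)))"
    using repr_aux[OF f X, of "{..<d} \<times> {..<d}"] eq by simp
  also have "\<dots> = (\<Sum>a<d. \<Sum>b<d. X $$ (a,b) * f (Em d a b))"
    by (simp add: sum.cartesian_product case_prod_beta)
  finally show ?thesis .
qed

lemma f_rk1: assumes f: "linf d f"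
  shows "f (rk1 d x) = qs d (\<lambda>i k. f (Em d k i)) x"
proof -
  have "f (rk1 d x) = (\<Sum>a<d. \<Sum>b<d. x a * cnj (x b) * f (Em d a b))"
    using repr[OF f rk1_carrier] by (simp add: rk1_def)
  also have "\<dots> = (\<Sum>b<d. \<Sum>a<d. x a * cnj (x b) * f (Em d a b))" by (rule sum.swap)
  also have "\<dots> = qs d (\<lambda>i k. f (Em d k i)) x" unfolding qs_def
    by (simp add: algebra_simps)
  finally show ?thesis .
qed

lemma vanish_E: assumes f: "linf d f" and z: "\<And>x. f (rk1 d x) = 0" and "a < d" "b < d"
  shows "f (Em d a b) = 0"
  using polar[of d "\<lambda>i k. f (Em d k i)" b a] f_rk1[OF f] z assms(3,4) by simp

lemma vanish: assumes f: "linf d f" and z: "\<And>x. f (rk1 d x) = 0" and X: "X \<in> carrier_mat d d"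
  shows "f X = 0"
  using repr[OF f X] vanish_E[OF f z] by simp

lemma qform_qs: "qform n A v = qs n (\<lambda>i j. A $$ (i,j)) (\<lambda>i. v $ i)"
  unfolding qform_def qs_def by simp

lemma qs_cong: "(\<And>i. i < n \<Longrightarrow> x i = y i) \<Longrightarrow> qs n K x = qs n K y"
  unfolding qs_def by (intro sum.cong refl) auto

lemma psd_psdf: assumes "psd d A" shows "psdf d (\<lambda>i j. A $$ (i,j))"
  unfolding psdf_def
proof
  fix x :: "nat \<Rightarrow> complex"
  have "vec d x \<in> carrier_vec d" by simp
  then have "Im (qform d A (vec d x)) = 0 \<and> Re (qform d A (vec d x)) \<ge> 0" using assms unfolding psd_def by blast
  moreover have "qform d A (vec d x) = qs d (\<lambda>i j. A $$ (i,j)) x" unfolding qform_qs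
    by (rule qs_cong) simp
  ultimately show "Im (qs d (\<lambda>i j. A $$ (i,j)) x) = 0 \<and> 0 \<le> Re (qs d (\<lambda>i j. A $$ (i,j)) x)" by simp
qed

lemma psdf_psd: assumes "A \<in> carrier_mat d d" "psdf d (\<lambda>i j. A $$ (i,j))" shows "psd d A"
  using assms unfolding psd_def psdf_def qform_qs by blast

lemma qs_rk1: "qs d (\<lambda>i j. rk1 d x $$ (i,j)) v = (\<Sum>i<d. cnj (v i) * x i) * cnj (\<Sum>i<d. cnj (v i) * x i)"
proof -
  have "qs d (\<lambda>i j. rk1 d x $$ (i,j)) v = (\<Sum>i<d. \<Sum>j<d. (cnj (v i) * x i) * (cnj (x j) * v j))"
    unfolding qs_def rk1_def by (intro sum.cong refl) (simp add: algebra_simps)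
  also have "\<dots> = (\<Sum>i<d. cnj (v i) * x i) * (\<Sum>j<d. cnj (x j) * v j)"
    by (simp add: sum_product)
  finally show ?thesis by (simp add: mult.commute)
qed

lemma zcnj: "Im (z * cnj z) = 0 \<and> 0 \<le> Re (z * cnj z)"
  by (simp add: complex_mult_cnj del: complex_In_mult_cnj_zero)

lemma psd_rk1: "psd d (rk1 d x)"
  unfolding psdf_def qs_rk1 using zcnj by (intro psdf_psd) (auto simp only: psdf_def qs_rk1 rk1_carrier)

lemma linf_entry: assumes "\<forall>A \<in> carrier_mat d d. P A \<in> carrier_mat d d"
  "\<forall>A \<in> carrier_mat d d. \<forall>B \<in> carrier_mat d d. \<forall>a b :: complex.
         P (a \<cdot>\<^sub>m A + b \<cdot>\<^sub>m B) = a \<cdot>\<^sub>m P A + b \<cdot>\<^sub>m P B" "i < d" "j < d"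
  shows "linf d (\<lambda>X. P X $$ (i,j))"
  unfolding linf_def
proof (intro ballI allI)
  fix A B :: "complex mat" and a b :: complex assume A: "A \<in> carrier_mat d d" and B: "B \<in> carrier_mat d d"
  have PA: "P A \<in> carrier_mat d d" and PB: "P B \<in> carrier_mat d d" using assms(1) A B by auto
  show "P (a \<cdot>\<^sub>m A + b \<cdot>\<^sub>m B) $$ (i, j) = a * P A $$ (i, j) + b * P B $$ (i, j)"
    using assms(2) A B PA PB assms(3,4) by (simp add: carrier_matD)
qed

lemma linf_add2: "linf d f \<Longrightarrow> linf d g \<Longrightarrow> linf d (\<lambda>X. f X + g X)"
  unfolding linf_def by (simp add: algebra_simps)
lemma linf_diff2: "linf d f \<Longrightarrow> linf d g \<Longrightarrow> linf d (\<lambda>X. f X - g X)"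
  unfolding linf_def by (simp add: algebra_simps)
lemma linf_cmul: "linf d f \<Longrightarrow> linf d (\<lambda>X. c * f X)"
  unfolding linf_def by (simp add: algebra_simps)
lemma linf_0: "linf d (\<lambda>X. 0)"
  unfolding linf_def by simp
lemma linf_sum: "(\<And>j. j \<in> J \<Longrightarrow> linf d (f j)) \<Longrightarrow> linf d (\<lambda>X. \<Sum>j\<in>J. f j X)"
  unfolding linf_def by (simp add: sum.distrib sum_distrib_left)
lemma linf_trace: "linf d mtrace"
  unfolding linf_def mtrace_def by (auto simp: sum.distrib sum_distrib_left carrier_matD)
lemma linf_qform: "linf d (\<lambda>X. qform d X v)"
  unfolding linf_def qform_def by (auto simp: sum.distrib sum_distrib_left carrier_matD algebra_simps)



definition pp :: "nat \<Rightarrow> (nat \<Rightarrow> real) \<Rightarrow> nat \<Rightarrow> real" where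
  "pp d p k = (if k < d then p k else 0)"

definition rr :: "nat \<Rightarrow> (nat \<Rightarrow> real) \<Rightarrow> nat \<Rightarrow> real" where
  "rr d p j = real (j+1) * (pp d p j - pp d p (Suc j))"

definition tw :: "nat \<Rightarrow> nat \<Rightarrow> real" where
  "tw a j = (if a \<le> j then 1 / real (j+1) else 0)"

lemma tau_entry: "a < d \<Longrightarrow> b < d \<Longrightarrow> tau d j $$ (a,b) = (if a = b then complex_of_real (tw a j) else 0)"
  unfolding tau_def tw_def by auto

lemma tele1: "(\<Sum>j<n. real (j+1) * (f j - f (Suc j))) = (\<Sum>j<n. f j) - real n * (f n :: real)"
  by (induction n) (auto simp: algebra_simps)

lemma tele2: "a \<le> n \<Longrightarrow> (\<Sum>j<n. if a \<le> j then f j - f (Suc j) else 0) = f a - (f n :: real)"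
proof (induction n)
  case 0 then show ?case by simp
next
  case (Suc n)
  show ?case
  proof (cases "a = Suc n")
    case True
    have "(\<Sum>j<Suc n. if a \<le> j then f j - f (Suc j) else 0) = (\<Sum>j<Suc n. 0)"
      using True by (intro sum.cong) auto
    then show ?thesis using True by simp
  next
    case False then have "a \<le> n" using Suc by simp
    then show ?thesis using Suc by simp
  qed
qed

lemma passive_rr:
  assumes nn: "\<forall>i<d. 0 \<le> p i" and s1: "(\<Sum>i<d. p i) = 1"
    and dec: "\<forall>i j. i \<le> j \<longrightarrow> j < d \<longrightarrow> p j \<le> p i"
  shows "\<forall>j<d. 0 \<le> rr d p j" "(\<Sum>j<d. rr d p j) = 1"
    "\<forall>a<d. (\<Sum>j<d. rr d p j * tw a j) = p a"
proof -
  show "\<forall>j<d. 0 \<le> rr d p j"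
  proof (intro allI impI)
    fix j assume j: "j < d"
    have "pp d p (Suc j) \<le> pp d p j" using nn dec j unfolding pp_def by auto
    then show "0 \<le> rr d p j" unfolding rr_def by simp
  qed
  have "(\<Sum>j<d. rr d p j) = (\<Sum>j<d. pp d p j) - real d * pp d p d"
    unfolding rr_def by (rule tele1)
  also have "\<dots> = 1" using s1 unfolding pp_def by simp
  finally show "(\<Sum>j<d. rr d p j) = 1" .
  show "\<forall>a<d. (\<Sum>j<d. rr d p j * tw a j) = p a"
  proof (intro allI impI)
    fix a assume a: "a < d"
    have "(\<Sum>j<d. rr d p j * tw a j) = (\<Sum>j<d. if a \<le> j then pp d p j - pp d p (Suc j) else 0)"
      unfolding rr_def tw_def by (intro sum.cong) (auto simp del: of_nat_Suc)
    also have "\<dots> = pp d p a - pp d p d" using a by (intro tele2) simp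
    also have "\<dots> = p a" using a unfolding pp_def by simp
    finally show "(\<Sum>j<d. rr d p j * tw a j) = p a" .
  qed
qed

lemma sum_tw: "j < d \<Longrightarrow> (\<Sum>a<d. tw a j) = 1"
proof -
  assume j: "j < d"
  have "(\<Sum>a<d. tw a j) = (\<Sum>a\<in>{a\<in>{..<d}. a \<le> j}. 1 / real (j+1))"
    unfolding tw_def by (rule sum.inter_filter[symmetric]) simp
  also have "{a\<in>{..<d}. a \<le> j} = {..j}" using j by auto
  finally show ?thesis by (simp del: of_nat_Suc)
qed

lemma rr_passive:
  assumes nn: "\<forall>j<d. 0 \<le> q j" and s1: "(\<Sum>j<d. q j) = 1"
  defines "p \<equiv> \<lambda>a. (\<Sum>j<d. q j * tw a j)"
  shows "\<forall>i<d. 0 \<le> p i" "(\<Sum>i<d. p i) = 1" "\<forall>i j. i \<le> j \<longrightarrow> j < d \<longrightarrow> p j \<le> p i"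
proof -
  show "\<forall>i<d. 0 \<le> p i" unfolding p_def tw_def using nn by (auto intro!: sum_nonneg)
  have "(\<Sum>i<d. p i) = (\<Sum>j<d. q j * (\<Sum>a<d. tw a j))"
  proof -
    have "(\<Sum>i<d. p i) = (\<Sum>i<d. \<Sum>j<d. q j * tw i j)" unfolding p_def by simp
    also have "\<dots> = (\<Sum>j<d. \<Sum>i<d. q j * tw i j)" by (rule sum.swap)
    also have "\<dots> = (\<Sum>j<d. q j * (\<Sum>a<d. tw a j))" by (simp add: sum_distrib_left)
    finally show ?thesis .
  qed
  also have "\<dots> = (\<Sum>j<d. q j)" by (intro sum.cong) (auto simp: sum_tw)
  finally show "(\<Sum>i<d. p i) = 1" using s1 by simp
  show "\<forall>i j. i \<le> j \<longrightarrow> j < d \<longrightarrow> p j \<le> p i"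
  proof (intro allI impI)
    fix i j :: nat assume "i \<le> j" "j < d"
    then show "p j \<le> p i" unfolding p_def
      by (intro sum_mono) (use nn in \<open>auto simp: tw_def\<close>)
  qed
qed



lemma complete:
  fixes v :: "nat \<Rightarrow> nat \<Rightarrow> complex" and d :: nat
  assumes orth: "\<forall>j<d. \<forall>k<d. (\<Sum>i<d. cnj (v j i) * v k i) = (if j = k then 1 else 0)"
    and i: "i < d" and k: "k < d"
  shows "(\<Sum>m<d. v m i * cnj (v m k)) = (if i = k then 1 else (0::complex))"
proof -
  define U where "U = mat d d (\<lambda>(i,m). v m i)"
  define V where "V = mat d d (\<lambda>(m,i). cnj (v m i))"
  have U: "U \<in> carrier_mat d d" and V: "V \<in> carrier_mat d d" unfolding U_def V_def by auto
  have "V * U = 1\<^sub>m d"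
  proof (rule eq_matI)
    fix m n assume "m < dim_row (1\<^sub>m d :: complex mat)" "n < dim_col (1\<^sub>m d :: complex mat)"
    then have m: "m < d" and n: "n < d" by auto
    have "(V * U) $$ (m,n) = (\<Sum>i<d. cnj (v m i) * v n i)"
      using m n U V by (simp add: scalar_prod_def U_def V_def lessThan_atLeast0)
    then show "(V * U) $$ (m,n) = 1\<^sub>m d $$ (m,n)" using orth m n by simp
  qed (use U V in auto)
  then have UV: "U * V = 1\<^sub>m d" using mat_mult_left_right_inverse[OF V U] by simp
  have "(U * V) $$ (i,k) = (\<Sum>m<d. v m i * cnj (v m k))"
    using i k U V by (simp add: scalar_prod_def U_def V_def lessThan_atLeast0)
  then show ?thesis using UV i k by simp
qed

lemma qs_mix:
  "qs d (\<lambda>i k. \<Sum>j\<in>J. c j * v j i * cnj (v j k)) x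
   = (\<Sum>j\<in>J. c j * ((\<Sum>i<d. cnj (x i) * v j i) * cnj (\<Sum>i<d. cnj (x i) * v j i)))"
proof -
  have "qs d (\<lambda>i k. \<Sum>j\<in>J. c j * v j i * cnj (v j k)) x
     = (\<Sum>i<d. \<Sum>k<d. \<Sum>j\<in>J. c j * ((cnj (x i) * v j i) * (x k * cnj (v j k))))"
    unfolding qs_def by (intro sum.cong refl) (simp add: sum_distrib_left sum_distrib_right algebra_simps)
  also have "\<dots> = (\<Sum>i<d. \<Sum>j\<in>J. \<Sum>k<d. c j * ((cnj (x i) * v j i) * (x k * cnj (v j k))))"
    by (intro sum.cong refl) (rule sum.swap)
  also have "\<dots> = (\<Sum>j\<in>J. \<Sum>i<d. \<Sum>k<d. c j * ((cnj (x i) * v j i) * (x k * cnj (v j k))))"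
    by (rule sum.swap)
  also have "\<dots> = (\<Sum>j\<in>J. c j * ((\<Sum>i<d. cnj (x i) * v j i) * (\<Sum>k<d. x k * cnj (v j k))))"
  proof (intro sum.cong refl)
    fix j
    have "(\<Sum>i<d. cnj (x i) * v j i) * (\<Sum>k<d. x k * cnj (v j k))
        = (\<Sum>i<d. \<Sum>k<d. (cnj (x i) * v j i) * (x k * cnj (v j k)))" by (rule sum_product)
    then show "(\<Sum>i<d. \<Sum>k<d. c j * ((cnj (x i) * v j i) * (x k * cnj (v j k))))
      = c j * ((\<Sum>i<d. cnj (x i) * v j i) * (\<Sum>k<d. x k * cnj (v j k)))"
      by (simp add: sum_distrib_left)
  qed
  finally show ?thesis by simp
qed

lemma sum_zcnj: assumes "\<forall>j\<in>J. 0 \<le> c j"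
  shows "Im (\<Sum>j\<in>J. complex_of_real (c j) * (z j * cnj (z j))) = 0 \<and>
         0 \<le> Re (\<Sum>j\<in>J. complex_of_real (c j) * (z j * cnj (z j)))"
proof -
  have "\<forall>j. Im (z j * cnj (z j)) = 0 \<and> 0 \<le> Re (z j * cnj (z j))" using zcnj by blast
  then show ?thesis using assms by (auto simp: Im_sum Re_sum intro!: sum_nonneg)
qed



lemma trace_sum:
  fixes \<psi> :: "nat \<Rightarrow> complex vec"
  assumes orth: "\<forall>j<d. \<forall>k<d. (\<Sum>i<d. cnj (\<psi> j $ i) * \<psi> k $ i) = (if j = k then 1 else 0)"
    and \<rho>: "\<rho> \<in> carrier_mat d d"
  shows "(\<Sum>j<d. qform d \<rho> (\<psi> j)) = mtrace \<rho>"
proof -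
  have "(\<Sum>j<d. qform d \<rho> (\<psi> j)) = (\<Sum>j<d. \<Sum>i<d. \<Sum>k<d. cnj (\<psi> j $ i) * \<rho> $$ (i,k) * \<psi> j $ k)"
    unfolding qform_def by simp
  also have "\<dots> = (\<Sum>i<d. \<Sum>j<d. \<Sum>k<d. cnj (\<psi> j $ i) * \<rho> $$ (i,k) * \<psi> j $ k)" by (rule sum.swap)
  also have "\<dots> = (\<Sum>i<d. \<Sum>k<d. \<Sum>j<d. cnj (\<psi> j $ i) * \<rho> $$ (i,k) * \<psi> j $ k)"
    by (rule sum.cong[OF refl], rule sum.swap)
  also have "\<dots> = (\<Sum>i<d. \<Sum>k<d. \<rho> $$ (i,k) * (\<Sum>j<d. \<psi> j $ k * cnj (\<psi> j $ i)))"
    by (rule sum.cong[OF refl], rule sum.cong[OF refl], simp add: sum_distrib_left ac_simps)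
  also have "\<dots> = (\<Sum>i<d. \<Sum>k<d. \<rho> $$ (i,k) * (if k = i then 1 else 0))"
  proof -
    have c: "(\<Sum>j<d. \<psi> j $ k * cnj (\<psi> j $ i)) = (if k = i then 1 else 0)" if "i < d" "k < d" for i k
      using complete[of d "\<lambda>j i. \<psi> j $ i", OF orth that(2,1)] by simp
    show ?thesis by (rule sum.cong[OF refl], rule sum.cong[OF refl], simp add: c)
  qed
  also have "\<dots> = (\<Sum>i<d. \<rho> $$ (i,i))" by (rule sum.cong[OF refl], rule sum_dl2[unfolded dl_def], simp)
  also have "\<dots> = mtrace \<rho>" unfolding mtrace_def using \<rho> by simp
  finally show ?thesis .
qed



lemma backward:
  fixes \<psi> :: "nat \<Rightarrow> complex vec" and P :: "complex mat \<Rightarrow> complex mat"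
  assumes \<psi>: "\<forall>j<d. \<psi> j \<in> carrier_vec d"
    and orth: "\<forall>j<d. \<forall>k<d. (\<Sum>i<d. cnj (\<psi> j $ i) * \<psi> k $ i) = (if j = k then 1 else 0)"
    and F: "\<forall>\<rho> \<in> carrier_mat d d.
          P \<rho> = mat d d (\<lambda>(a, b). \<Sum>j<d. qform d \<rho> (\<psi> j) * tau d j $$ (a, b))"
  shows "P ` density_states d = passive_states d"
proof
  show "P ` density_states d \<subseteq> passive_states d"
  proof
    fix \<sigma> assume "\<sigma> \<in> P ` density_states d"
    then obtain \<rho> where st: "\<rho> \<in> density_states d" and \<sigma>: "\<sigma> = P \<rho>" by auto
    have psd: "psd d \<rho>" and tr: "mtrace \<rho> = 1" using st unfolding density_states_def by auto
    have \<rho>: "\<rho> \<in> carrier_mat d d" using psd unfolding psd_def by simp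
    define q where "q j = Re (qform d \<rho> (\<psi> j))" for j
    have qeq: "qform d \<rho> (\<psi> j) = complex_of_real (q j)" and qnn: "0 \<le> q j" if "j < d" for j
      using psd \<psi> that unfolding psd_def q_def by (auto simp: complex_eq_iff)
    have qs1: "(\<Sum>j<d. q j) = 1"
    proof -
      have "(\<Sum>j<d. complex_of_real (q j)) = 1" using trace_sum[OF orth \<rho>] tr qeq by simp
      then have "complex_of_real (\<Sum>j<d. q j) = 1" by simp
      then show ?thesis by (simp only: of_real_eq_1_iff)
    qed
    define p where "p = (\<lambda>a. (\<Sum>j<d. q j * tw a j))"
    note pp = rr_passive[of d q, OF _ qs1, folded p_def]
    have "\<sigma> = mat d d (\<lambda>(i, k). if i = k then complex_of_real (p i) else 0)"
      unfolding \<sigma> F[rule_format, OF \<rho>]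
    proof (rule eq_matI)
      fix a b assume "a < dim_row (mat d d (\<lambda>(i, k). if i = k then complex_of_real (p i) else 0))"
        "b < dim_col (mat d d (\<lambda>(i, k). if i = k then complex_of_real (p i) else 0))"
      then have a: "a < d" and b: "b < d" by auto
      show "mat d d (\<lambda>(a, b). \<Sum>j<d. qform d \<rho> (\<psi> j) * tau d j $$ (a, b)) $$ (a, b) =
          mat d d (\<lambda>(i, k). if i = k then complex_of_real (p i) else 0) $$ (a, b)"
        using a b by (simp add: tau_entry qeq p_def)
    qed auto
    then show "\<sigma> \<in> passive_states d" unfolding passive_states_def
      by (intro CollectI exI[of _ p] conjI) (use pp qnn in \<open>auto simp: p_def\<close>)
  qed
next
  show "passive_states d \<subseteq> P ` density_states d"
  proof
    fix \<sigma> assume "\<sigma> \<in> passive_states d"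
    then obtain p where nn: "\<forall>i<d. 0 \<le> p i" and s1: "(\<Sum>i<d. p i) = 1"
      and dec: "\<forall>i j. i \<le> j \<longrightarrow> j < d \<longrightarrow> p j \<le> p i"
      and \<sigma>: "\<sigma> = mat d d (\<lambda>(i, k). if i = k then complex_of_real (p i) else 0)"
      unfolding passive_states_def by blast
    note R = passive_rr[OF nn s1 dec]
    define r where "r = rr d p"
    define v where "v j i = \<psi> j $ i" for j i
    define \<rho> where "\<rho> = mat d d (\<lambda>(i,k). \<Sum>j<d. complex_of_real (r j) * v j i * cnj (v j k))"
    have \<rho>: "\<rho> \<in> carrier_mat d d" unfolding \<rho>_def by simp
    have qs\<rho>: "qs d (\<lambda>i k. \<rho> $$ (i,k)) x = (\<Sum>j<d. complex_of_real (r j) *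
        ((\<Sum>i<d. cnj (x i) * v j i) * cnj (\<Sum>i<d. cnj (x i) * v j i)))" for x
    proof -
      have "qs d (\<lambda>i k. \<rho> $$ (i,k)) x = qs d (\<lambda>i k. \<Sum>j<d. complex_of_real (r j) * v j i * cnj (v j k)) x"
        unfolding qs_def \<rho>_def by (intro sum.cong refl) simp
      then show ?thesis by (simp only: qs_mix)
    qed
    have psd: "psd d \<rho>"
    proof (rule psdf_psd[OF \<rho>], unfold psdf_def qs\<rho>, rule allI)
      fix x :: "nat \<Rightarrow> complex"
      show "Im (\<Sum>j<d. complex_of_real (r j) * ((\<Sum>i<d. cnj (x i) * v j i) * cnj (\<Sum>i<d. cnj (x i) * v j i))) = 0 \<and>
         0 \<le> Re (\<Sum>j<d. complex_of_real (r j) * ((\<Sum>i<d. cnj (x i) * v j i) * cnj (\<Sum>i<d. cnj (x i) * v j i)))"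
        by (rule sum_zcnj) (use R(1) in \<open>simp add: r_def\<close>)
    qed
    have tr: "mtrace \<rho> = 1"
    proof -
      have "mtrace \<rho> = (\<Sum>i<d. \<Sum>j<d. complex_of_real (r j) * v j i * cnj (v j i))"
        unfolding mtrace_def \<rho>_def by simp
      also have "\<dots> = (\<Sum>j<d. complex_of_real (r j) * (\<Sum>i<d. cnj (v j i) * v j i))"
        by (subst sum.swap, rule sum.cong[OF refl], simp add: sum_distrib_left ac_simps)
      also have "\<dots> = (\<Sum>j<d. complex_of_real (r j))"
        using orth unfolding v_def by (intro sum.cong[OF refl]) simp
      also have "\<dots> = complex_of_real (\<Sum>j<d. r j)" by simp
      also have "\<dots> = 1" using R(2) unfolding r_def by simp
      finally show ?thesis .
    qed
    have qf: "qform d \<rho> (\<psi> m) = complex_of_real (r m)" if m: "m < d" for m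
    proof -
      have "qform d \<rho> (\<psi> m) = (\<Sum>j<d. complex_of_real (r j) *
        ((\<Sum>i<d. cnj (v m i) * v j i) * cnj (\<Sum>i<d. cnj (v m i) * v j i)))"
        unfolding qform_qs qs\<rho> v_def by simp
      also have "\<dots> = (\<Sum>j<d. if j = m then complex_of_real (r j) else 0)"
      proof (rule sum.cong[OF refl])
        fix j assume "j \<in> {..<d}"
        then have "(\<Sum>i<d. cnj (v m i) * v j i) = (if m = j then 1 else 0)" using orth m unfolding v_def by simp
        then show "complex_of_real (r j) * ((\<Sum>i<d. cnj (v m i) * v j i) * cnj (\<Sum>i<d. cnj (v m i) * v j i)) =
             (if j = m then complex_of_real (r j) else 0)" by auto
      qed
      also have "\<dots> = complex_of_real (r m)" using m by simp
      finally show ?thesis .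
    qed
    have "P \<rho> = \<sigma>"
      unfolding \<sigma> F[rule_format, OF \<rho>]
    proof (rule eq_matI)
      fix a b assume "a < dim_row (mat d d (\<lambda>(i, k). if i = k then complex_of_real (p i) else 0))"
        "b < dim_col (mat d d (\<lambda>(i, k). if i = k then complex_of_real (p i) else 0))"
      then have a: "a < d" and b: "b < d" by auto
      have "(\<Sum>j<d. complex_of_real (r j) * complex_of_real (tw a j)) = complex_of_real (\<Sum>j<d. r j * tw a j)"
        by simp
      also have "\<dots> = complex_of_real (p a)" using R(3) a unfolding r_def by simp
      finally have "(\<Sum>j<d. complex_of_real (r j) * complex_of_real (tw a j)) = complex_of_real (p a)" .
      then show "mat d d (\<lambda>(a, b). \<Sum>j<d. qform d \<rho> (\<psi> j) * tau d j $$ (a, b)) $$ (a, b) =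
          mat d d (\<lambda>(i, k). if i = k then complex_of_real (p i) else 0) $$ (a, b)"
        using a b by (auto simp: tau_entry qf)
    qed auto
    moreover have "\<rho> \<in> density_states d" using psd tr unfolding density_states_def by simp
    ultimately show "\<sigma> \<in> P ` density_states d" by blast
  qed
qed



lemma sum_single: fixes l d :: nat assumes "l < d" "\<And>n. n < d \<Longrightarrow> n \<noteq> l \<Longrightarrow> g n = 0"
  shows "(\<Sum>n<d. g n) = (g l :: 'a :: comm_monoid_add)"
proof -
  have "(\<Sum>n<d. g n) = g l + (\<Sum>n\<in>{..<d} - {l}. g n)" using assms(1) by (simp add: sum.remove)
  also have "(\<Sum>n\<in>{..<d} - {l}. g n) = 0" using assms(2) by (intro sum.neutral) auto
  finally show ?thesis by simp
qed

lemma qs_scale: "qs d K (\<lambda>i. z * x i) = z * cnj z * qs d K x"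
  unfolding qs_def by (simp add: sum_distrib_left ac_simps)

lemma qform_smult: "A \<in> carrier_mat d d \<Longrightarrow> qform d (c \<cdot>\<^sub>m A) v = c * qform d A v"
  unfolding qform_def sum_distrib_left
  by (rule sum.cong[OF refl], rule sum.cong[OF refl]) (auto simp: carrier_matD)

lemma psd_scale: assumes "psd d X" "0 \<le> c" shows "psd d (complex_of_real c \<cdot>\<^sub>m X)"
proof -
  have X: "X \<in> carrier_mat d d" using assms unfolding psd_def by simp
  show ?thesis unfolding psd_def using assms(1) X assms(2)
    by (auto simp: qform_smult psd_def)
qed

lemma psd_diag: assumes "psd d X" "i < d" shows "X $$ (i,i) = complex_of_real (Re (X $$ (i,i)))" "0 \<le> Re (X $$ (i,i))"
proof -
  have "psdf d (\<lambda>i j. X $$ (i,j))" using assms(1) by (rule psd_psdf)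
  then have "Im (qs d (\<lambda>i j. X $$ (i,j)) (dl i)) = 0 \<and> 0 \<le> Re (qs d (\<lambda>i j. X $$ (i,j)) (dl i))"
    unfolding psdf_def by blast
  then show "X $$ (i,i) = complex_of_real (Re (X $$ (i,i)))" "0 \<le> Re (X $$ (i,i))"
    using qs_dl[OF assms(2)] by (auto simp: complex_eq_iff)
qed

lemma psd_cases: assumes "psd d X"
  shows "X = 0\<^sub>m d d \<or> (\<exists>t>0. \<exists>\<rho> \<in> density_states d. X = complex_of_real t \<cdot>\<^sub>m \<rho>)"
proof -
  have X: "X \<in> carrier_mat d d" using assms unfolding psd_def by simp
  define t where "t = (\<Sum>i<d. Re (X $$ (i,i)))"
  have tr: "mtrace X = complex_of_real t" unfolding mtrace_def t_def using X psd_diag(1)[OF assms]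
    by (simp add: carrier_matD(1))
  have t0: "0 \<le> t" unfolding t_def using psd_diag(2)[OF assms] by (auto intro: sum_nonneg)
  show ?thesis
  proof (cases "t = 0")
    case True
    then have z: "Re (X $$ (i,i)) = 0" if "i < d" for i
      using sum_nonneg_eq_0_iff[of "{..<d}" "\<lambda>i. Re (X $$ (i,i))"] psd_diag(2)[OF assms] that
      unfolding t_def by auto
    have "X = 0\<^sub>m d d"
    proof (rule eq_matI)
      fix i j assume "i < dim_row (0\<^sub>m d d :: complex mat)" "j < dim_col (0\<^sub>m d d :: complex mat)"
      then have i: "i < d" and j: "j < d" by auto
      have "(cmod (X $$ (i,j)))^2 \<le> Re (X $$ (i,i)) * Re (X $$ (j,j))"
        using cs_entry[OF psd_psdf[OF assms] j i] by simp
      then have "(cmod (X $$ (i,j)))^2 \<le> 0" using z i j by simp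
      then show "X $$ (i,j) = 0\<^sub>m d d $$ (i,j)" using i j by simp
    qed (use X in auto)
    then show ?thesis by simp
  next
    case False
    then have tp: "t > 0" using t0 by simp
    define \<rho> where "\<rho> = complex_of_real (1/t) \<cdot>\<^sub>m X"
    have "psd d \<rho>" unfolding \<rho>_def using psd_scale[OF assms, of "1/t"] tp by simp
    moreover have "mtrace \<rho> = 1" using tr tp X unfolding \<rho>_def mtrace_def
      by (simp add: carrier_matD sum_divide_distrib[symmetric])
    moreover have "X = complex_of_real t \<cdot>\<^sub>m \<rho>" unfolding \<rho>_def using X tp
      by (intro eq_matI) (auto simp: carrier_matD)
    ultimately show ?thesis using tp unfolding density_states_def by blast
  qed
qed

lemma lin_state_zero: assumes "linf d h" "\<forall>\<rho> \<in> density_states d. h \<rho> = 0" "psd d X"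
  shows "h X = 0"
proof -
  from psd_cases[OF assms(3)] show ?thesis
  proof
    assume "X = 0\<^sub>m d d" then show ?thesis using linf_zero[OF assms(1)] by simp
  next
    assume "\<exists>t>0. \<exists>\<rho> \<in> density_states d. X = complex_of_real t \<cdot>\<^sub>m \<rho>"
    then obtain t \<rho> where "\<rho> \<in> density_states d" "X = complex_of_real t \<cdot>\<^sub>m \<rho>" by blast
    moreover then have "\<rho> \<in> carrier_mat d d" unfolding density_states_def psd_def by simp
    ultimately show ?thesis using linf_smult[OF assms(1)] assms(2) by simp
  qed
qed

lemma lin_state_nonneg: assumes "linf d h" "\<forall>\<rho> \<in> density_states d. Im (h \<rho>) = 0 \<and> 0 \<le> Re (h \<rho>)" "psd d X"
  shows "Im (h X) = 0 \<and> 0 \<le> Re (h X)"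
proof -
  from psd_cases[OF assms(3)] show ?thesis
  proof
    assume "X = 0\<^sub>m d d" then show ?thesis using linf_zero[OF assms(1)] by simp
  next
    assume "\<exists>t>0. \<exists>\<rho> \<in> density_states d. X = complex_of_real t \<cdot>\<^sub>m \<rho>"
    then obtain t \<rho> where "t > 0" "\<rho> \<in> density_states d" "X = complex_of_real t \<cdot>\<^sub>m \<rho>" by blast
    moreover then have "\<rho> \<in> carrier_mat d d" unfolding density_states_def psd_def by simp
    ultimately show ?thesis using linf_smult[OF assms(1)] assms(2) by simp
  qed
qed



lemma key_vec:
  assumes psd\<rho>: "psd d \<rho>" and tr\<rho>: "mtrace \<rho> = 1"
   and linQ: "\<forall>l<d. linf d (Q l)"
   and nonneg: "\<forall>l<d. \<forall>X. psd d X \<longrightarrow> Im (Q l X) = 0 \<and> 0 \<le> Re (Q l X)"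
   and sumtr: "\<forall>X \<in> carrier_mat d d. (\<Sum>l<d. Q l X) = mtrace X"
   and vals: "\<forall>l<d. Q l \<rho> = (if l = k then 1 else 0)" and k: "k < d"
  shows "\<exists>v. (\<Sum>i<d. cnj (v i) * v i) = 1 \<and> (\<forall>l<d. Q l (rk1 d v) = (if l = k then 1 else 0))"
proof -
  have \<rho>: "\<rho> \<in> carrier_mat d d" using psd\<rho> unfolding psd_def by simp
  define K where "K = (\<lambda>i j. \<rho> $$ (i,j))"
  have pK: "psdf d K" unfolding K_def by (rule psd_psdf[OF psd\<rho>])
  obtain a where a: "a < d" and na: "\<rho> $$ (a,a) \<noteq> 0"
  proof (rule ccontr)
    assume "\<not> thesis"
    then have "\<forall>a<d. \<rho> $$ (a,a) = 0" using that by blast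
    then have "mtrace \<rho> = 0" unfolding mtrace_def using \<rho> by simp
    then show False using tr\<rho> by simp
  qed
  define \<alpha> where "\<alpha> = Re (\<rho> $$ (a,a))"
  have aeq: "\<rho> $$ (a,a) = complex_of_real \<alpha>" unfolding \<alpha>_def using psd_diag(1)[OF psd\<rho> a] .
  have \<alpha>p: "\<alpha> > 0"
  proof -
    have "\<alpha> \<noteq> 0" using na aeq by auto
    moreover have "0 \<le> \<alpha>" using psd_diag(2)[OF psd\<rho> a] unfolding \<alpha>_def .
    ultimately show ?thesis by simp
  qed
  define c where "c i = \<rho> $$ (i,a)" for i
  define R where "R = mat d d (\<lambda>(i,j). \<rho> $$ (i,j) - \<rho> $$ (i,a) * \<rho> $$ (a,j) / \<rho> $$ (a,a))"
  have R: "R \<in> carrier_mat d d" unfolding R_def by simp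
  have hermK: "\<rho> $$ (a,j) = cnj (\<rho> $$ (j,a))" if "j < d" for j
    using herm[OF pK that a] unfolding K_def .
  have dec: "\<rho> = complex_of_real (1/\<alpha>) \<cdot>\<^sub>m rk1 d c + R"
  proof (rule eq_matI)
    fix i j assume "i < dim_row (complex_of_real (1/\<alpha>) \<cdot>\<^sub>m rk1 d c + R)" "j < dim_col (complex_of_real (1/\<alpha>) \<cdot>\<^sub>m rk1 d c + R)"
    then have i: "i < d" and j: "j < d" using R by auto
    show "\<rho> $$ (i,j) = (complex_of_real (1/\<alpha>) \<cdot>\<^sub>m rk1 d c + R) $$ (i,j)"
      using i j R aeq \<alpha>p hermK[OF j] by (simp add: rk1_def R_def c_def field_simps)
  qed (use \<rho> R in auto)
  have psdR: "psd d R"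
  proof (rule psdf_psd[OF R], unfold psdf_def, rule allI)
    fix x :: "nat \<Rightarrow> complex"
    define s where "s = bil d K x (dl a)"
    have s1: "s = (\<Sum>i<d. cnj (x i) * \<rho> $$ (i,a))" unfolding s_def K_def using bil_dl_right[OF a] .
    have s2: "cnj s = (\<Sum>j<d. \<rho> $$ (a,j) * x j)"
      using bil_swap_herm[OF pK a, of x] bil_dl_left[OF a, of K x] unfolding s_def K_def by simp
    have "qs d (\<lambda>i j. R $$ (i,j)) x = (\<Sum>i<d. \<Sum>j<d. cnj (x i) * \<rho> $$ (i,j) * x j
          - (cnj (x i) * \<rho> $$ (i,a)) * (\<rho> $$ (a,j) * x j) / complex_of_real \<alpha>)"
      unfolding qs_def R_def aeq
      by (rule sum.cong[OF refl], rule sum.cong[OF refl]) (auto simp: field_simps)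
    also have "\<dots> = qs d K x - s * cnj s / complex_of_real \<alpha>"
    proof -
      have "s * cnj s = (\<Sum>i<d. cnj (x i) * \<rho> $$ (i,a)) * (\<Sum>j<d. \<rho> $$ (a,j) * x j)"
        by (subst s2, subst s1, rule refl)
      also have "\<dots> = (\<Sum>i<d. \<Sum>j<d. (cnj (x i) * \<rho> $$ (i,a)) * (\<rho> $$ (a,j) * x j))"
        by (rule sum_product)
      finally have pr: "s * cnj s = \<dots>" .
      show ?thesis unfolding qs_def K_def pr sum_subtractf sum_divide_distrib[symmetric] ..
    qed
    finally have eq: "qs d (\<lambda>i j. R $$ (i,j)) x = qs d K x - s * cnj s / complex_of_real \<alpha>" .
    have cs1: "(cmod s)^2 \<le> Re (qs d K x) * \<alpha>" using cs[OF pK a, of x] unfolding s_def K_def \<alpha>_def .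
    have imq: "Im (qs d K x) = 0" using pK unfolding psdf_def by blast
    have "s * cnj s = complex_of_real ((cmod s)^2)" by (simp add: complex_mult_cnj cmod_power2)
    then have "qs d (\<lambda>i j. R $$ (i,j)) x = complex_of_real (Re (qs d K x) - (cmod s)^2 / \<alpha>)"
      using eq imq by (simp add: complex_eq_iff)
    moreover have "0 \<le> Re (qs d K x) - (cmod s)^2 / \<alpha>" using cs1 \<alpha>p by (simp add: field_simps)
    ultimately show "Im (qs d (\<lambda>i j. R $$ (i,j)) x) = 0 \<and> 0 \<le> Re (qs d (\<lambda>i j. R $$ (i,j)) x)" by simp
  qed
  have Qdec: "Q l \<rho> = complex_of_real (1/\<alpha>) * Q l (rk1 d c) + Q l R" if "l < d" for l
  proof -
    have L: "linf d (Q l)" using linQ that by blast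
    have "Q l \<rho> = Q l (complex_of_real (1/\<alpha>) \<cdot>\<^sub>m rk1 d c + R)" using dec by (rule arg_cong)
    also have "\<dots> = Q l (complex_of_real (1/\<alpha>) \<cdot>\<^sub>m rk1 d c) + Q l R"
      by (rule linf_add[OF L]) (auto simp: R)
    also have "Q l (complex_of_real (1/\<alpha>) \<cdot>\<^sub>m rk1 d c) = complex_of_real (1/\<alpha>) * Q l (rk1 d c)"
      by (rule linf_smult[OF L]) simp
    finally show ?thesis .
  qed
  have zero: "Q l (rk1 d c) = 0" if l: "l < d" "l \<noteq> k" for l
  proof -
    have n1: "Im (Q l (rk1 d c)) = 0 \<and> 0 \<le> Re (Q l (rk1 d c))" using nonneg psd_rk1 l by blast
    have n2: "Im (Q l R) = 0 \<and> 0 \<le> Re (Q l R)" using nonneg psdR l by blast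
    have "0 = Re (complex_of_real (1/\<alpha>) * Q l (rk1 d c) + Q l R)" using Qdec[OF l(1)] vals l by simp
    then have "0 = (1/\<alpha>) * Re (Q l (rk1 d c)) + Re (Q l R)" by simp
    then have "Re (Q l (rk1 d c)) = 0" using n1 n2 \<alpha>p
      by (smt (verit, best) divide_pos_pos mult_pos_pos zero_less_one)
    then show ?thesis using n1 by (simp add: complex_eq_iff)
  qed
  define n where "n = (\<Sum>i<d. (cmod (c i))^2)"
  have tr_rk1: "mtrace (rk1 d x) = (\<Sum>i<d. x i * cnj (x i))" for x
    unfolding mtrace_def rk1_def by simp
  have ncs: "(\<Sum>i<d. c i * cnj (c i)) = complex_of_real n"
    unfolding n_def by (simp add: complex_mult_cnj cmod_power2)
  have np: "n > 0"
  proof -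
    have "(cmod (c a))^2 \<le> n" unfolding n_def using a by (intro member_le_sum) auto
    moreover have "cmod (c a) > 0" unfolding c_def using na by simp
    ultimately show ?thesis by (smt (verit) zero_less_power)
  qed
  have Qk: "Q k (rk1 d c) = complex_of_real n"
  proof -
    have "(\<Sum>l<d. Q l (rk1 d c)) = Q k (rk1 d c)" using k zero by (intro sum_single) auto
    then show ?thesis using sumtr tr_rk1[of c] ncs by simp
  qed
  have sq: "complex_of_real (sqrt n) ^ 2 = complex_of_real n" using np
    by (simp flip: of_real_power)
  define v where "v i = complex_of_real (1 / sqrt n) * c i" for i
  have rv: "rk1 d v = complex_of_real (1/n) \<cdot>\<^sub>m rk1 d c"
    by (rule eq_matI) (use np in \<open>auto simp: rk1_def v_def power2_eq_square[symmetric] sq\<close>)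
  show ?thesis
  proof (intro exI conjI allI impI)
    have "(\<Sum>i<d. cnj (v i) * v i) = complex_of_real (1/n) * (\<Sum>i<d. c i * cnj (c i))"
      unfolding v_def sum_distrib_left using np
      by (intro sum.cong refl) (simp add: field_simps power2_eq_square[symmetric] sq)
    then show "(\<Sum>i<d. cnj (v i) * v i) = 1" using ncs np by simp
  next
    fix l assume l: "l < d"
    have "Q l (rk1 d v) = complex_of_real (1/n) * Q l (rk1 d c)"
      unfolding rv using linQ l by (intro linf_smult) auto
    then show "Q l (rk1 d v) = (if l = k then 1 else 0)" using Qk zero l np by auto
  qed
qed



lemma linf_mulc: "linf d f \<Longrightarrow> linf d (\<lambda>X. f X * c)"
  unfolding linf_def by (simp add: algebra_simps)

lemma nz1: "1 + complex_of_nat k \<noteq> 0"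
proof -
  have "complex_of_nat (Suc k) \<noteq> 0" by (simp del: of_nat_Suc)
  then show ?thesis by simp
qed

lemma tau_passive: assumes k: "k < d" shows "tau d k \<in> passive_states d"
proof -
  have "tau d k = mat d d (\<lambda>(i, j). if i = j then complex_of_real (tw i k) else 0)"
    by (rule eq_matI) (auto simp: tau_entry, auto simp: tau_def)
  moreover have "\<forall>i<d. 0 \<le> tw i k" by (simp add: tw_def)
  moreover have "(\<Sum>i<d. tw i k) = 1" using sum_tw[OF k] .
  moreover have "\<forall>i j. i \<le> j \<longrightarrow> j < d \<longrightarrow> tw j k \<le> tw i k" by (simp add: tw_def)
  ultimately show ?thesis unfolding passive_states_def by (intro CollectI exI[of _ "\<lambda>i. tw i k"]) simp
qed

lemma forward:
  fixes d :: nat and P :: "complex mat \<Rightarrow> complex mat"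
  assumes C1: "\<forall>A \<in> carrier_mat d d. P A \<in> carrier_mat d d"
    and C2: "\<forall>A \<in> carrier_mat d d. \<forall>B \<in> carrier_mat d d. \<forall>a b :: complex.
         P (a \<cdot>\<^sub>m A + b \<cdot>\<^sub>m B) = a \<cdot>\<^sub>m P A + b \<cdot>\<^sub>m P B"
    and H: "P ` density_states d = passive_states d"
  shows "\<exists>\<psi> :: nat \<Rightarrow> complex vec.
       (\<forall>j<d. \<psi> j \<in> carrier_vec d) \<and>
       (\<forall>j<d. \<forall>k<d. (\<Sum>i<d. cnj (\<psi> j $ i) * \<psi> k $ i) = (if j = k then 1 else 0)) \<and>
       (\<forall>\<rho> \<in> carrier_mat d d.
          P \<rho> = mat d d (\<lambda>(a, b). \<Sum>j<d. qform d \<rho> (\<psi> j) * tau d j $$ (a, b)))"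
proof -
  define Q where "Q j X = of_nat (j+1) * (P X $$ (j,j) - (if Suc j < d then P X $$ (Suc j, Suc j) else 0))" for j X
  have linE: "linf d (\<lambda>X. P X $$ (a,b))" if "a<d" "b<d" for a b using linf_entry[OF C1 C2 that] .
  have linQ: "\<forall>l<d. linf d (Q l)"
  proof (intro allI impI)
    fix j assume j: "j < d"
    show "linf d (Q j)"
    proof (cases "Suc j < d")
      case True
      then have "Q j = (\<lambda>X. of_nat (j+1) * (P X $$ (j,j) - P X $$ (Suc j, Suc j)))" unfolding Q_def by (intro ext) simp
      then show ?thesis using linE j True by (simp add: linf_cmul linf_diff2)
    next
      case False
      then have "Q j = (\<lambda>X. of_nat (j+1) * P X $$ (j,j))" unfolding Q_def by (intro ext) simp
      then show ?thesis using linf_cmul[OF linE[OF j j]] by simp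
    qed
  qed
  have st: "\<exists>p. (\<forall>j<d. Q j \<rho> = complex_of_real (rr d p j)) \<and> (\<forall>j<d. 0 \<le> rr d p j) \<and> (\<Sum>j<d. rr d p j) = 1
     \<and> (\<forall>a<d. \<forall>b<d. P \<rho> $$ (a,b) = (\<Sum>j<d. Q j \<rho> * tau d j $$ (a,b)))" if "\<rho> \<in> density_states d" for \<rho>
  proof -
    have "P \<rho> \<in> passive_states d" using H that by blast
    then obtain p where nn: "\<forall>i<d. 0 \<le> p i" and s1: "(\<Sum>i<d. p i) = 1"
      and dec: "\<forall>i j. i \<le> j \<longrightarrow> j < d \<longrightarrow> p j \<le> p i"
      and P\<rho>: "P \<rho> = mat d d (\<lambda>(i, k). if i = k then complex_of_real (p i) else 0)"
      unfolding passive_states_def by blast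
    note R = passive_rr[OF nn s1 dec]
    have Qj: "Q j \<rho> = complex_of_real (rr d p j)" if "j<d" for j
      using that unfolding Q_def P\<rho> rr_def pp_def by auto
    have "P \<rho> $$ (a,b) = (\<Sum>j<d. Q j \<rho> * tau d j $$ (a,b))" if ab: "a<d" "b<d" for a b
    proof -
      have "(\<Sum>j<d. Q j \<rho> * tau d j $$ (a,b)) = (\<Sum>j<d. complex_of_real (rr d p j) * (if a = b then complex_of_real (tw a j) else 0))"
        using ab by (intro sum.cong refl) (simp add: Qj tau_entry)
      also have "\<dots> = (if a = b then complex_of_real (\<Sum>j<d. rr d p j * tw a j) else 0)"
        by (cases "a = b") simp_all
      also have "\<dots> = P \<rho> $$ (a,b)" using R(3) ab unfolding P\<rho> by auto
      finally show ?thesis by simp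
    qed
    then show ?thesis using Qj R(1,2) by blast
  qed
  have nonneg: "\<forall>l<d. \<forall>X. psd d X \<longrightarrow> Im (Q l X) = 0 \<and> 0 \<le> Re (Q l X)"
  proof (intro allI impI)
    fix l X assume l: "l < d" and X: "psd d X"
    show "Im (Q l X) = 0 \<and> 0 \<le> Re (Q l X)"
    proof (rule lin_state_nonneg[OF _ _ X])
      show "linf d (Q l)" using linQ l by blast
      show "\<forall>\<rho>\<in>density_states d. Im (Q l \<rho>) = 0 \<and> 0 \<le> Re (Q l \<rho>)"
      proof
        fix \<rho> assume "\<rho> \<in> density_states d"
        then obtain p where "\<forall>j<d. Q j \<rho> = complex_of_real (rr d p j)" "\<forall>j<d. 0 \<le> rr d p j"
          using st by blast
        then show "Im (Q l \<rho>) = 0 \<and> 0 \<le> Re (Q l \<rho>)" using l by simp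
      qed
    qed
  qed
  have linS: "linf d (\<lambda>X. (\<Sum>l<d. Q l X) - mtrace X)"
    by (intro linf_diff2 linf_sum linf_trace) (use linQ in auto)
  have sumtr: "\<forall>X \<in> carrier_mat d d. (\<Sum>l<d. Q l X) = mtrace X"
  proof
    fix X :: "complex mat" assume X: "X \<in> carrier_mat d d"
    have "(\<lambda>X. (\<Sum>l<d. Q l X) - mtrace X) X = 0"
    proof (rule vanish[OF linS _ X])
      fix x show "(\<Sum>l<d. Q l (rk1 d x)) - mtrace (rk1 d x) = 0"
      proof (rule lin_state_zero[OF linS _ psd_rk1])
        show "\<forall>\<rho>\<in>density_states d. (\<Sum>l<d. Q l \<rho>) - mtrace \<rho> = 0"
        proof
          fix \<rho> assume r: "\<rho> \<in> density_states d"
          then obtain p where "\<forall>j<d. Q j \<rho> = complex_of_real (rr d p j)" "(\<Sum>j<d. rr d p j) = 1"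
            using st by blast
          moreover have "mtrace \<rho> = 1" using r unfolding density_states_def by simp
          ultimately show "(\<Sum>l<d. Q l \<rho>) - mtrace \<rho> = 0"
            by (simp add: of_real_sum[symmetric])
        qed
      qed
    qed
    then show "(\<Sum>l<d. Q l X) = mtrace X" by simp
  qed
  have Pform: "P X $$ (a,b) = (\<Sum>j<d. Q j X * tau d j $$ (a,b))" if X: "X \<in> carrier_mat d d" and ab: "a < d" "b < d" for X a b
  proof -
    have linH: "linf d (\<lambda>X. P X $$ (a,b) - (\<Sum>j<d. Q j X * tau d j $$ (a,b)))"
      by (intro linf_diff2 linf_sum linf_mulc linE ab) (use linQ in auto)
    have "(\<lambda>X. P X $$ (a,b) - (\<Sum>j<d. Q j X * tau d j $$ (a,b))) X = 0"
    proof (rule vanish[OF linH _ X])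
      fix x show "P (rk1 d x) $$ (a,b) - (\<Sum>j<d. Q j (rk1 d x) * tau d j $$ (a,b)) = 0"
      proof (rule lin_state_zero[OF linH _ psd_rk1])
        show "\<forall>\<rho>\<in>density_states d. P \<rho> $$ (a,b) - (\<Sum>j<d. Q j \<rho> * tau d j $$ (a,b)) = 0"
        proof
          fix \<rho> assume "\<rho> \<in> density_states d"
          then have "\<forall>a<d. \<forall>b<d. P \<rho> $$ (a,b) = (\<Sum>j<d. Q j \<rho> * tau d j $$ (a,b))" using st by blast
          then show "P \<rho> $$ (a,b) - (\<Sum>j<d. Q j \<rho> * tau d j $$ (a,b)) = 0" using ab by simp
        qed
      qed
    qed
    then show ?thesis by simp
  qed
  have F3: "\<exists>v. (\<Sum>i<d. cnj (v i) * v i) = 1 \<and> (\<forall>l<d. Q l (rk1 d v) = (if l = k then 1 else 0))" if k: "k < d" for k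
  proof -
    obtain \<rho> where r: "\<rho> \<in> density_states d" and P\<rho>: "P \<rho> = tau d k"
      using tau_passive[OF k] H by (metis imageE)
    have vals: "\<forall>l<d. Q l \<rho> = (if l = k then 1 else 0)"
    proof (intro allI impI)
      fix l assume l: "l < d"
      show "Q l \<rho> = (if l = k then 1 else 0)"
      proof (cases "Suc l < d")
        case True
        then show ?thesis unfolding Q_def P\<rho> using l k
          by (cases "l < k"; cases "l = k") (auto simp: tau_entry tw_def nz1)
      next
        case False
        then have "l = d - 1" using l by simp
        then show ?thesis unfolding Q_def P\<rho> using l k False
          by (cases "l = k") (auto simp: tau_entry tw_def)
      qed
    qed
    have "psd d \<rho>" "mtrace \<rho> = 1" using r unfolding density_states_def by auto
    then show ?thesis using key_vec[of d \<rho> Q k] vals k linQ nonneg sumtr by blast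
  qed
  define v where "v k = (SOME w. (\<Sum>i<d. cnj (w i) * w i) = 1 \<and> (\<forall>l<d. Q l (rk1 d w) = (if l = k then 1 else 0)))" for k
  have vprop: "(\<Sum>i<d. cnj (v k i) * v k i) = 1 \<and> (\<forall>l<d. Q l (rk1 d (v k)) = (if l = k then 1 else 0))" if "k < d" for k
    unfolding v_def by (rule someI_ex[OF F3[OF that]])
  define G where "G l i k = Q l (Em d k i)" for l i k
  have qsG: "Q l (rk1 d x) = qs d (G l) x" if "l < d" for l x
    unfolding G_def using f_rk1[of d "Q l" x] linQ that by simp
  have pG: "psdf d (G l)" if "l < d" for l
    unfolding psdf_def
  proof
    fix x show "Im (qs d (G l) x) = 0 \<and> 0 \<le> Re (qs d (G l) x)"
      using nonneg that psd_rk1[of d x] unfolding qsG[OF that, symmetric] by blast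
  qed
  have F2: "(\<Sum>l<d. G l i k) = (if i = k then 1 else 0)" if "i < d" "k < d" for i k
  proof -
    have "(\<Sum>l<d. G l i k) = mtrace (Em d k i)" unfolding G_def using sumtr by simp
    also have "\<dots> = (\<Sum>m<d. if m = k \<and> m = i then 1 else 0)" unfolding mtrace_def Em_def by simp
    also have "\<dots> = (if i = k then 1 else 0)" using that by (cases "i = k") (auto intro!: sum.neutral)
    finally show ?thesis .
  qed
  have qsv: "qs d (G l) (v m) = (if l = m then 1 else 0)" if "l < d" "m < d" for l m
    using vprop[OF that(2)] qsG[OF that(1)] that by auto
  have F4: "(\<Sum>j<d. G l i j * v m j) = (if l = m then v m i else 0)" if i: "i < d" and l: "l < d" and m: "m < d" for i l m
  proof (cases "l = m")
    case False
    then show ?thesis using cs_zero[OF pG[OF l] _ i, of "v m"] qsv[OF l m] by simp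
  next
    case True
    have "(\<Sum>n<d. \<Sum>j<d. G n i j * v l j) = (\<Sum>j<d. G l i j * v l j)"
      by (rule sum_single[OF l]) (use cs_zero pG qsv i l in auto)
    moreover have "(\<Sum>n<d. \<Sum>j<d. G n i j * v l j) = (\<Sum>j<d. (\<Sum>n<d. G n i j) * v l j)"
      by (subst sum.swap) (simp add: sum_distrib_right)
    moreover have "\<dots> = (\<Sum>j<d. (if i = j then 1 else 0) * v l j)"
      using i by (intro sum.cong refl) (simp add: F2)
    moreover have "\<dots> = v l i" using sum_dl1[unfolded dl_def, OF i, of "v l"] by (simp add: eq_commute)
    ultimately show ?thesis using True by simp
  qed
  have orth: "\<forall>m<d. \<forall>l<d. (\<Sum>i<d. cnj (v m i) * v l i) = (if m = l then 1 else 0)"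
  proof (intro allI impI)
    fix m l assume m: "m < d" and l: "l < d"
    show "(\<Sum>i<d. cnj (v m i) * v l i) = (if m = l then 1 else 0)"
    proof (cases "m = l")
      case True then show ?thesis using vprop[OF l] by simp
    next
      case False
      have "(\<Sum>i<d. cnj (v m i) * v l i) = (\<Sum>i<d. cnj (v m i) * (\<Sum>j<d. G l i j * v l j))"
        by (intro sum.cong refl) (simp add: F4 l)
      also have "\<dots> = (\<Sum>i<d. \<Sum>j<d. cnj (v m i) * G l i j * v l j)"
        by (simp only: sum_distrib_left mult.assoc)
      also have "\<dots> = (\<Sum>j<d. \<Sum>i<d. cnj (v m i) * G l i j * v l j)"
        by (rule sum.swap)
      also have "\<dots> = (\<Sum>j<d. (\<Sum>i<d. cnj (v m i) * G l i j) * v l j)"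
        by (simp only: sum_distrib_right)
      also have "\<dots> = (\<Sum>j<d. cnj (\<Sum>i<d. G l j i * v m i) * v l j)"
      proof (rule sum.cong[OF refl])
        fix j assume j: "j \<in> {..<d}"
        have "(\<Sum>i<d. cnj (v m i) * G l i j) = (\<Sum>i<d. cnj (G l j i * v m i))"
        proof (rule sum.cong[OF refl])
          fix i assume "i \<in> {..<d}"
          then show "cnj (v m i) * G l i j = cnj (G l j i * v m i)"
            using herm[OF pG[OF l], of j i] j by simp
        qed
        then show "(\<Sum>i<d. cnj (v m i) * G l i j) * v l j = cnj (\<Sum>i<d. G l j i * v m i) * v l j"
          by simp
      qed
      also have "\<dots> = 0" using F4 l m False by simp
      finally show ?thesis using False by simp
    qed
  qed
  have Gform: "G l i k = v l i * cnj (v l k)" if l: "l < d" and i: "i < d" and k: "k < d" for l i k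
  proof -
    have "G l i k = (\<Sum>j<d. G l i j * (if j = k then 1 else 0))" using sum_dl2[unfolded dl_def, OF k, of "G l i"] by simp
    also have "\<dots> = (\<Sum>j<d. G l i j * (\<Sum>m<d. v m j * cnj (v m k)))"
      by (intro sum.cong refl) (simp add: complete[OF orth _ k])
    also have "\<dots> = (\<Sum>m<d. (\<Sum>j<d. G l i j * v m j) * cnj (v m k))"
      by (simp add: sum_distrib_left sum_distrib_right ac_simps) (rule sum.swap)
    also have "\<dots> = (\<Sum>m<d. (if l = m then v m i else 0) * cnj (v m k))"
      by (intro sum.cong refl) (simp add: F4 i l)
    also have "\<dots> = v l i * cnj (v l k)" by (subst sum_single[OF l]) auto
    finally show ?thesis .
  qed
  define \<psi> where "\<psi> j = vec d (v j)" for j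
  have Qform: "Q l X = qform d X (\<psi> l)" if l: "l < d" and X: "X \<in> carrier_mat d d" for l X
  proof -
    have "Q l X = (\<Sum>a<d. \<Sum>b<d. X $$ (a,b) * Q l (Em d a b))" using repr linQ l X by blast
    also have "\<dots> = (\<Sum>a<d. \<Sum>b<d. cnj (\<psi> l $ a) * X $$ (a,b) * \<psi> l $ b)"
      by (rule sum.cong[OF refl], rule sum.cong[OF refl])
         (simp add: G_def[symmetric] Gform l \<psi>_def ac_simps)
    finally show ?thesis unfolding qform_def .
  qed
  show ?thesis
  proof (intro exI conjI ballI allI impI)
    show "\<And>j. j < d \<Longrightarrow> \<psi> j \<in> carrier_vec d" unfolding \<psi>_def by simp
    show "\<And>j k. j < d \<Longrightarrow> k < d \<Longrightarrow> (\<Sum>i<d. cnj (\<psi> j $ i) * \<psi> k $ i) = (if j = k then 1 else 0)"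
      using orth unfolding \<psi>_def by simp
    fix \<rho> :: "complex mat" assume \<rho>: "\<rho> \<in> carrier_mat d d"
    show "P \<rho> = mat d d (\<lambda>(a, b). \<Sum>j<d. qform d \<rho> (\<psi> j) * tau d j $$ (a, b))"
    proof (rule eq_matI)
      fix a b assume "a < dim_row (mat d d (\<lambda>(a, b). \<Sum>j<d. qform d \<rho> (\<psi> j) * tau d j $$ (a, b)))"
        "b < dim_col (mat d d (\<lambda>(a, b). \<Sum>j<d. qform d \<rho> (\<psi> j) * tau d j $$ (a, b)))"
      then have a: "a < d" and b: "b < d" by auto
      show "P \<rho> $$ (a, b) = mat d d (\<lambda>(a, b). \<Sum>j<d. qform d \<rho> (\<psi> j) * tau d j $$ (a, b)) $$ (a, b)"
        using Pform[OF \<rho> a b] a b Qform[OF _ \<rho>] by simp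
    qed (use C1 \<rho> in auto)
  qed
qed


theorem mainTheorem6:
  fixes d :: nat and P :: "complex mat \<Rightarrow> complex mat"
  assumes "0 < d" and "quantum_channel d P"
  shows "P ` density_states d = passive_states d \<longleftrightarrow>
    (\<exists>\<psi> :: nat \<Rightarrow> complex vec.
       (\<forall>j<d. \<psi> j \<in> carrier_vec d) \<and>
       (\<forall>j<d. \<forall>k<d. (\<Sum>i<d. cnj (\<psi> j $ i) * \<psi> k $ i) = (if j = k then 1 else 0)) \<and>
       (\<forall>\<rho> \<in> carrier_mat d d.
          P \<rho> = mat d d (\<lambda>(a, b). \<Sum>j<d. qform d \<rho> (\<psi> j) * tau d j $$ (a, b))))"
proof
  have C1: "\<forall>A \<in> carrier_mat d d. P A \<in> carrier_mat d d"
    and C2: "\<forall>A \<in> carrier_mat d d. \<forall>B \<in> carrier_mat d d. \<forall>a b :: complex.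
         P (a \<cdot>\<^sub>m A + b \<cdot>\<^sub>m B) = a \<cdot>\<^sub>m P A + b \<cdot>\<^sub>m P B"
    using assms(2) unfolding quantum_channel_def by blast+
  assume H: "P ` density_states d = passive_states d"
  show "\<exists>\<psi> :: nat \<Rightarrow> complex vec.
       (\<forall>j<d. \<psi> j \<in> carrier_vec d) \<and>
       (\<forall>j<d. \<forall>k<d. (\<Sum>i<d. cnj (\<psi> j $ i) * \<psi> k $ i) = (if j = k then 1 else 0)) \<and>
       (\<forall>\<rho> \<in> carrier_mat d d.
          P \<rho> = mat d d (\<lambda>(a, b). \<Sum>j<d. qform d \<rho> (\<psi> j) * tau d j $$ (a, b)))"
    by (rule forward[OF C1 C2 H])
next
  assume "\<exists>\<psi> :: nat \<Rightarrow> complex vec.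
       (\<forall>j<d. \<psi> j \<in> carrier_vec d) \<and>
       (\<forall>j<d. \<forall>k<d. (\<Sum>i<d. cnj (\<psi> j $ i) * \<psi> k $ i) = (if j = k then 1 else 0)) \<and>
       (\<forall>\<rho> \<in> carrier_mat d d.
          P \<rho> = mat d d (\<lambda>(a, b). \<Sum>j<d. qform d \<rho> (\<psi> j) * tau d j $$ (a, b)))"
  then obtain \<psi> :: "nat \<Rightarrow> complex vec" where
    a1: "\<forall>j<d. \<psi> j \<in> carrier_vec d" and
    a2: "\<forall>j<d. \<forall>k<d. (\<Sum>i<d. cnj (\<psi> j $ i) * \<psi> k $ i) = (if j = k then 1 else 0)" and
    a3: "\<forall>\<rho> \<in> carrier_mat d d.
          P \<rho> = mat d d (\<lambda>(a, b). \<Sum>j<d. qform d \<rho> (\<psi> j) * tau d j $$ (a, b))" by blast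
  show "P ` density_states d = passive_states d" by (rule backward[OF a1 a2 a3])
qed

end
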